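(* For any positive integer $n$: (1) the set $\mathcal{A}^0_n$ of well-labelled Motzkin paths $(\mathbf{p},\sigma)$ of size $n$ with $p_1=0$ is in bijection with $[n]\times\mathcal{A}_{n-1}$; (2) the set $\mathcal{A}^1_n$ of well-labelled Motzkin paths of size $n$ with $p_1=1$ is in bijection with the set $\mathcal{C}_n$ of all unordered pairs $\{(I',P'),(I'',P'')\}$ such that $I'\subseteq[n]$, $I''=[n]\setminus I'$, and $P'$, $P''$ are well-labelled Motzkin paths of respective sizes $|I'|$ and $|I''|$.
   Context: A well-labelled path of size $n$ is a pair $(\mathbf{p},\sigma)$ where $\mathbf{p}=p_1\ldots p_{n-1}$ is a word on $\{-1,0,+1\}$ and $\sigma$ is a permutation of $[n]$ such that $p_i=-1$ implies $\sigma_i<\sigma_{i+1}$ and $p_i=1$ implies $\sigma_i>\sigma_{i+1}$. It is Motzkin if $\sum_{i=1}^j p_i\ge0$ for all $j=1,\ldots,n-2$ and $\sum_{i=1}^{n-1}p_i=-1$ (so every Motzkin path has size at least $2$). $\mathcal{A}_m$ denotes the set of well-labelled Motzkin paths of size $m$ (empty for $m\le 1$). *)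

theory Defs
  imports Main
begin

text \<open>A path of size n: a step word p = p_1 ... p_(n-1) over {-1,0,1} (list of length n-1,
  0-indexed in Isabelle), and a permutation sigma of [n] = {1..n} given as the list
  sigma_1 ... sigma_n.\<close>

definition well_labelled_path :: "nat \<Rightarrow> int list \<Rightarrow> nat list \<Rightarrow> bool" where
  "well_labelled_path n p \<sigma> \<longleftrightarrow>
     length p = n - 1 \<and> set p \<subseteq> {-1, 0, 1} \<and>
     length \<sigma> = n \<and> distinct \<sigma> \<and> set \<sigma> = {1..n} \<and>
     (\<forall>i < n - 1. (p ! i = -1 \<longrightarrow> \<sigma> ! i < \<sigma> ! (i+1)) \<and>
                    (p ! i = 1 \<longrightarrow> \<sigma> ! i > \<sigma> ! (i+1)))"

definition motzkin :: "nat \<Rightarrow> int list \<Rightarrow> bool" where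
  "motzkin n p \<longleftrightarrow>
     (\<forall>j \<in> {1..n-2}. sum_list (take j p) \<ge> 0) \<and> sum_list (take (n-1) p) = -1"

definition wl_motzkin :: "nat \<Rightarrow> (int list \<times> nat list) set" where
  "wl_motzkin m = {(p, \<sigma>). well_labelled_path m p \<sigma> \<and> motzkin m p}"

definition wl_motzkin_first :: "int \<Rightarrow> nat \<Rightarrow> (int list \<times> nat list) set" where
  "wl_motzkin_first c n = {(p, \<sigma>) \<in> wl_motzkin n. p ! 0 = c}"

definition pair_set :: "nat \<Rightarrow> (nat set \<times> (int list \<times> nat list)) set set" where
  "pair_set n = {{(I, P1), ({1..n} - I, P2)} | I P1 P2.
      I \<subseteq> {1..n} \<and> P1 \<in> wl_motzkin (card I) \<and> P2 \<in> wl_motzkin (card ({1..n} - I))}"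

end

theory Submission
  imports Defs
begin


fun cstr :: "int list \<Rightarrow> nat list \<Rightarrow> bool" where
  "cstr (c#p) (x#y#s) = ((c = -1 \<longrightarrow> x < y) \<and> (c = 1 \<longrightarrow> y < x) \<and> cstr p (y#s))"
| "cstr _ _ = True"

lemma cstr_iff:
  "length \<sigma> = Suc (length p) \<Longrightarrow> cstr p \<sigma> \<longleftrightarrow>
    (\<forall>i<length p. (p!i = -1 \<longrightarrow> \<sigma>!i < \<sigma>!(i+1)) \<and> (p!i = 1 \<longrightarrow> \<sigma>!i > \<sigma>!(i+1)))"
proof (induction p arbitrary: \<sigma>)
  case Nil
  then show ?case by simp
next
  case (Cons c p)
  then obtain x y s where s: "\<sigma> = x#y#s"
    by (metis Suc_length_conv)
  have "length (y#s) = Suc (length p)" using Cons.prems s by simp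
  from Cons.IH[OF this] show ?case
    unfolding s by (simp add: All_less_Suc2)
qed

lemma cstr_zero[simp]: "cstr (0#q) (a#\<rho>) = cstr q \<rho>"
  by (cases \<rho>) auto

lemma cstr_map:
  "cstr p \<sigma> \<Longrightarrow> (\<forall>x\<in>set \<sigma>. \<forall>y\<in>set \<sigma>. x<y \<longrightarrow> h x < h y) \<Longrightarrow> cstr p (map h \<sigma>)"
  by (induction p \<sigma> rule: cstr.induct) auto

lemma cstr_snoc:
  "length \<sigma> = Suc (length p) \<Longrightarrow> cstr (p @ [c]) (\<sigma> @ [y]) \<longleftrightarrow>
     cstr p \<sigma> \<and> (c = -1 \<longrightarrow> last \<sigma> < y) \<and> (c = 1 \<longrightarrow> y < last \<sigma>)"
proof (induction p arbitrary: \<sigma>)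
  case Nil
  then obtain x where "\<sigma> = [x]" by (metis length_0_conv length_Suc_conv)
  then show ?case by simp
next
  case (Cons a p)
  then obtain x y s where s: "\<sigma> = x#y#s"
    by (metis Suc_length_conv)
  have "length (y#s) = Suc (length p)" using Cons.prems s by simp
  from Cons.IH[OF this] show ?case
    unfolding s by auto
qed

lemma cstr_rev:
  "length \<sigma> = Suc (length p) \<Longrightarrow> cstr p \<sigma> \<Longrightarrow> cstr (map uminus (rev p)) (rev \<sigma>)"
proof (induction p arbitrary: \<sigma>)
  case Nil
  then show ?case by simp
next
  case (Cons c p)
  then obtain x y s where s: "\<sigma> = x#y#s"
    by (metis Suc_length_conv)
  have l: "length (y#s) = Suc (length p)" using Cons.prems s by simp
  have "cstr p (y#s)" using Cons.prems s by simp
  from Cons.IH[OF l this] have "cstr (map uminus (rev p)) (rev (y#s))" .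
  moreover have "length (rev (y#s)) = Suc (length (map uminus (rev p)))" using l by simp
  ultimately show ?case using Cons.prems unfolding s
    by (simp only: rev.simps list.map map_append cstr_snoc) (auto simp: s)
qed

lemma cstr_app:
  "length \<sigma>1 = Suc (length p1) \<Longrightarrow> cstr (p1 @ c # p2) (\<sigma>1 @ y # \<sigma>2) \<longleftrightarrow>
     cstr p1 \<sigma>1 \<and> (c = -1 \<longrightarrow> last \<sigma>1 < y) \<and> (c = 1 \<longrightarrow> y < last \<sigma>1) \<and> cstr p2 (y#\<sigma>2)"
proof (induction p1 arbitrary: \<sigma>1)
  case Nil
  then obtain x where "\<sigma>1 = [x]" by (metis length_0_conv length_Suc_conv)
  then show ?case by simp
next
  case (Cons a p)
  then obtain x z s where s: "\<sigma>1 = x#z#s"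
    by (metis Suc_length_conv)
  have "length (z#s) = Suc (length p)" using Cons.prems s by simp
  from Cons.IH[OF this] show ?case
    unfolding s by auto
qed

lemma wl_iff: "well_labelled_path m p \<sigma> \<longleftrightarrow>
  (length p = m - 1 \<and> set p \<subseteq> {-1,0,1} \<and> length \<sigma> = m \<and> distinct \<sigma> \<and> set \<sigma> = {1..m} \<and> cstr p \<sigma>)"
proof -
  have "length p = m - 1 \<Longrightarrow> length \<sigma> = m \<Longrightarrow> cstr p \<sigma> = (\<forall>i < m - 1. (p ! i = -1 \<longrightarrow> \<sigma> ! i < \<sigma> ! (i+1)) \<and>
                    (p ! i = 1 \<longrightarrow> \<sigma> ! i > \<sigma> ! (i+1)))"
  proof (cases "m = 0")
    case True
    then show "length p = m - 1 \<Longrightarrow> length \<sigma> = m \<Longrightarrow> ?thesis" by simp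
  next
    case False
    then show "length p = m - 1 \<Longrightarrow> length \<sigma> = m \<Longrightarrow> ?thesis" using cstr_iff[of \<sigma> p] by simp
  qed
  then show ?thesis unfolding well_labelled_path_def by blast
qed

definition rk :: "nat set \<Rightarrow> nat \<Rightarrow> nat" where "rk S x = card {y\<in>S. y<x} + 1"
definition ur :: "nat set \<Rightarrow> nat \<Rightarrow> nat" where "ur S = the_inv_into S (rk S)"

lemma rk_less: "finite S \<Longrightarrow> x\<in>S \<Longrightarrow> y\<in>S \<Longrightarrow> x<y \<Longrightarrow> rk S x < rk S y"
proof -
  assume a: "finite S" "x\<in>S" "y\<in>S" "x<y"
  have "{z\<in>S. z<x} \<subset> {z\<in>S. z<y}" using a by auto
  then have "card {z\<in>S. z<x} < card {z\<in>S. z<y}" by (intro psubset_card_mono) (use a in auto)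
  then show ?thesis unfolding rk_def by simp
qed

lemma rk_inj: "finite S \<Longrightarrow> inj_on (rk S) S"
  unfolding inj_on_def by (metis linorder_neq_iff rk_less less_irrefl)

lemma rk_range: "finite S \<Longrightarrow> x\<in>S \<Longrightarrow> rk S x \<in> {1..card S}"
proof -
  assume a: "finite S" "x\<in>S"
  have "{z\<in>S. z<x} \<subset> S" using a by auto
  then have "card {z\<in>S. z<x} < card S" by (intro psubset_card_mono) (use a in auto)
  then show ?thesis unfolding rk_def by simp
qed

lemma rk_image: "finite S \<Longrightarrow> rk S ` S = {1..card S}"
proof -
  assume f: "finite S"
  have "rk S ` S \<subseteq> {1..card S}" using rk_range[OF f] by auto
  moreover have "card (rk S ` S) = card {1..card S}"
    using card_image[OF rk_inj[OF f]] by simp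
  ultimately show ?thesis by (intro card_subset_eq) auto
qed

lemma ur_rk: "finite S \<Longrightarrow> x\<in>S \<Longrightarrow> ur S (rk S x) = x"
  unfolding ur_def by (rule the_inv_into_f_f[OF rk_inj])

lemma ur_in: "finite S \<Longrightarrow> i\<in>{1..card S} \<Longrightarrow> ur S i \<in> S"
  unfolding ur_def by (rule the_inv_into_into[OF rk_inj]) (auto simp: rk_image)

lemma rk_ur: "finite S \<Longrightarrow> i\<in>{1..card S} \<Longrightarrow> rk S (ur S i) = i"
  unfolding ur_def by (rule f_the_inv_into_f[OF rk_inj]) (auto simp: rk_image)

lemma ur_less: "finite S \<Longrightarrow> i\<in>{1..card S} \<Longrightarrow> j\<in>{1..card S} \<Longrightarrow> i<j \<Longrightarrow> ur S i < ur S j"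
proof (rule ccontr)
  assume a: "finite S" "i\<in>{1..card S}" "j\<in>{1..card S}" "i<j" "\<not> ur S i < ur S j"
  then have "ur S j < ur S i \<or> ur S j = ur S i" by auto
  then show False
  proof
    assume "ur S j < ur S i"
    from rk_less[OF a(1) ur_in[OF a(1) a(3)] ur_in[OF a(1) a(2)] this] a show False
      by (simp add: rk_ur)
  next
    assume "ur S j = ur S i"
    then have "rk S (ur S j) = rk S (ur S i)" by simp
    with a show False by (simp add: rk_ur)
  qed
qed

lemma ur_inj: "finite S \<Longrightarrow> inj_on (ur S) {1..card S}"
  unfolding inj_on_def by (metis rk_ur)

lemma ur_image: "finite S \<Longrightarrow> ur S ` {1..card S} = S"
proof
  assume f: "finite S"
  show "ur S ` {1..card S} \<subseteq> S" using ur_in[OF f] by blast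
  show "S \<subseteq> ur S ` {1..card S}"
  proof
    fix x assume "x \<in> S"
    then have "x = ur S (rk S x)" "rk S x \<in> {1..card S}" using ur_rk[OF f] rk_range[OF f] by auto
    then show "x \<in> ur S ` {1..card S}" by blast
  qed
qed

definition std :: "nat list \<Rightarrow> nat list" where "std xs = map (rk (set xs)) xs"

lemma std_props:
  assumes "distinct xs"
  shows "length (std xs) = length xs" "distinct (std xs)" "set (std xs) = {1..length xs}"
    "cstr p xs \<Longrightarrow> cstr p (std xs)"
proof -
  show "length (std xs) = length xs" by (simp add: std_def)
  show "distinct (std xs)" unfolding std_def using assms rk_inj[of "set xs"]
    by (simp add: distinct_map)
  show "set (std xs) = {1..length xs}" unfolding std_def
    using rk_image[of "set xs"] distinct_card[OF assms] by simp
  show "cstr p xs \<Longrightarrow> cstr p (std xs)" unfolding std_def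
    by (erule cstr_map) (auto intro: rk_less)
qed

lemma unstd_props:
  assumes "finite I" "distinct t" "set t = {1..card I}"
  shows "length (map (ur I) t) = length t" "distinct (map (ur I) t)" "set (map (ur I) t) = I"
    "cstr p t \<Longrightarrow> cstr p (map (ur I) t)" "std (map (ur I) t) = t"
proof -
  show "length (map (ur I) t) = length t" by simp
  show "distinct (map (ur I) t)" using assms ur_inj[of I] by (simp add: distinct_map)
  show si: "set (map (ur I) t) = I" using assms ur_image[of I] by simp
  show "cstr p t \<Longrightarrow> cstr p (map (ur I) t)"
    by (erule cstr_map) (use assms in \<open>auto intro: ur_less\<close>)
  show "std (map (ur I) t) = t" unfolding std_def si map_map
    by (rule map_idI) (use assms rk_ur in auto)
qed

lemma ur_std: "distinct xs \<Longrightarrow> map (ur (set xs)) (std xs) = xs"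
  unfolding std_def by (simp add: ur_rk map_idI)



lemma wlm_iff: "(p,\<sigma>) \<in> wl_motzkin n \<longleftrightarrow>
  (length p = n - 1 \<and> set p \<subseteq> {-1,0,1} \<and> length \<sigma> = n \<and> distinct \<sigma> \<and> set \<sigma> = {1..n} \<and> cstr p \<sigma> \<and> motzkin n p)"
  by (simp add: wl_motzkin_def wl_iff)

lemma motzkin_n: "motzkin n p \<Longrightarrow> n \<ge> 2"
  unfolding motzkin_def by (cases "n - 1 = 0") auto

definition f1 :: "int list \<times> nat list \<Rightarrow> nat \<times> int list \<times> nat list" where
  "f1 = (\<lambda>(p,\<sigma>). (hd \<sigma>, (tl p, std (tl \<sigma>))))"
definition g1 :: "nat \<Rightarrow> nat \<times> int list \<times> nat list \<Rightarrow> int list \<times> nat list" where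
  "g1 n = (\<lambda>(a,(q,\<tau>)). (0#q, a # map (ur ({1..n}-{a})) \<tau>))"

lemma part1_fwd:
  assumes "(p,\<sigma>) \<in> wl_motzkin_first 0 n"
  shows "f1 (p,\<sigma>) \<in> {1..n} \<times> wl_motzkin (n-1)"
    "g1 n (f1 (p,\<sigma>)) = (p,\<sigma>)"
proof -
  from assms have W: "length p = n - 1" "set p \<subseteq> {-1,0,1}" "length \<sigma> = n" "distinct \<sigma>"
    "set \<sigma> = {1..n}" "cstr p \<sigma>" "motzkin n p" "p!0 = 0"
    by (auto simp: wl_motzkin_first_def wlm_iff)
  have n2: "n \<ge> 2" using motzkin_n[OF W(7)] .
  obtain q where p: "p = 0 # q" using W(1) W(8) n2 by (cases p) auto
  obtain a \<rho> where s: "\<sigma> = a # \<rho>" using W(3) n2 by (cases \<sigma>) auto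
  have n3: "n \<ge> 3"
  proof (rule ccontr)
    assume "\<not> n \<ge> 3"
    then have "n = 2" using n2 by simp
    then have "q = []" using W(1) p by simp
    then show False using W(7) \<open>n = 2\<close> p unfolding motzkin_def by simp
  qed
  have a: "a \<in> {1..n}" using W(5) s by auto
  have dr: "distinct \<rho>" and sr: "set \<rho> = {1..n} - {a}" and lr: "length \<rho> = n - 1"
    using W(3-5) s by auto
  have cq: "cstr q \<rho>" using W(6) p s by simp
  have mq: "motzkin (n-1) q"
    unfolding motzkin_def
  proof (intro conjI ballI)
    fix j assume j: "j \<in> {1..n - 1 - 2}"
    have "Suc j \<in> {1..n-2}" using j by auto
    then have "sum_list (take (Suc j) p) \<ge> 0" using W(7) unfolding motzkin_def by blast
    then show "sum_list (take j q) \<ge> 0" using p by simp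
  next
    have "n - 1 = Suc (n - 1 - 1)" using n3 by simp
    then have "take (n-1) p = 0 # take (n - 1 - 1) q" using p by (metis take_Suc_Cons)
    then show "sum_list (take (n - 1 - 1) q) = -1" using W(7) unfolding motzkin_def by simp
  qed
  show "f1 (p,\<sigma>) \<in> {1..n} \<times> wl_motzkin (n-1)"
    unfolding f1_def using a std_props[OF dr] cq mq W(1,2) p s lr
    by (auto simp: wlm_iff)
  show "g1 n (f1 (p,\<sigma>)) = (p,\<sigma>)"
    unfolding f1_def g1_def using ur_std[OF dr] sr p s by simp
qed

lemma part1_bwd:
  assumes "y \<in> {1..n} \<times> wl_motzkin (n-1)"
  shows "g1 n y \<in> wl_motzkin_first 0 n" "f1 (g1 n y) = y"
proof -
  obtain a q \<tau> where y: "y = (a,(q,\<tau>))" by (cases y) auto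
  from assms have a: "a \<in> {1..n}" and W: "length q = n - 1 - 1" "set q \<subseteq> {-1,0,1}" "length \<tau> = n - 1"
    "distinct \<tau>" "set \<tau> = {1..n-1}" "cstr q \<tau>" "motzkin (n-1) q"
    by (auto simp: y wlm_iff)
  have n3: "n \<ge> 3" using motzkin_n[OF W(7)] by simp
  define S where "S = {1..n} - {a}"
  have fS: "finite S" and cS: "card S = n - 1" using a by (auto simp: S_def)
  note U = unstd_props[OF fS W(4), unfolded cS, OF W(5)]
  have mp: "motzkin n (0#q)"
    unfolding motzkin_def
  proof (intro conjI ballI)
    fix j assume j: "j \<in> {1..n - 2}"
    show "sum_list (take j (0#q)) \<ge> 0"
    proof (cases j)
      case 0 then show ?thesis by simp
    next
      case (Suc j')
      show ?thesis
      proof (cases "j' = 0")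
        case True then show ?thesis using Suc by simp
      next
        case False
        then have "j' \<in> {1..n - 1 - 2}" using j Suc by auto
        then show ?thesis using W(7) Suc unfolding motzkin_def by simp
      qed
    qed
  next
    have "n - 1 = Suc (n - 1 - 1)" using n3 by simp
    then have "take (n-1) (0#q) = 0 # take (n - 1 - 1) q" by (metis take_Suc_Cons)
    then show "sum_list (take (n - 1) (0#q)) = -1" using W(7) unfolding motzkin_def by simp
  qed
  have "a \<notin> S" by (simp add: S_def)
  have "insert a S = {1..n}" using a by (auto simp: S_def)
  moreover have g: "g1 n y = (0#q, a # map (ur S) \<tau>)" by (simp add: g1_def y S_def)
  ultimately show "g1 n y \<in> wl_motzkin_first 0 n"
    unfolding wl_motzkin_first_def using U W mp n3 \<open>a \<notin> S\<close>
    by (auto simp: wlm_iff)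
  show "f1 (g1 n y) = y"
    unfolding g f1_def using U by (simp add: y)
qed

lemma part1: "bij_betw f1 (wl_motzkin_first 0 n) ({1..n} \<times> wl_motzkin (n-1))"
proof (rule bij_betw_byWitness[where f'="g1 n"])
  show "\<forall>a\<in>wl_motzkin_first 0 n. g1 n (f1 a) = a" using part1_fwd(2) by auto
  show "\<forall>a'\<in>{1..n} \<times> wl_motzkin (n - 1). f1 (g1 n a') = a'" using part1_bwd(2) by blast
  show "f1 ` wl_motzkin_first 0 n \<subseteq> {1..n} \<times> wl_motzkin (n - 1)" 
  proof (rule image_subsetI)
    fix x assume "x \<in> wl_motzkin_first 0 n"
    then show "f1 x \<in> {1..n} \<times> wl_motzkin (n - 1)" using part1_fwd(1) by (cases x) blast
  qed
  show "g1 n ` ({1..n} \<times> wl_motzkin (n - 1)) \<subseteq> wl_motzkin_first 0 n" using part1_bwd(1) by blast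
qed



lemma ps_step: "i < length p \<Longrightarrow> sum_list (take (Suc i) p) = sum_list (take i p) + p!i"
  by (simp add: take_Suc_conv_app_nth)

lemma ivt:
  fixes f :: "nat \<Rightarrow> int"
  assumes st: "\<And>i. a \<le> i \<Longrightarrow> i < b \<Longrightarrow> f (Suc i) \<ge> f i - 1"
    and ab: "a \<le> b" and fa: "f a > 0" and fb: "f b < 0"
  shows "\<exists>j. a < j \<and> j < b \<and> f j = 0"
proof -
  define j where "j = (LEAST j. a \<le> j \<and> f j \<le> 0)"
  have ex: "a \<le> b \<and> f b \<le> 0" using ab fb by simp
  have j1: "a \<le> j \<and> f j \<le> 0" unfolding j_def by (rule LeastI[of _ b]) (use ex in auto)
  have jb: "j \<le> b" unfolding j_def by (rule Least_le) (use ex in auto)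
  have ja: "j \<noteq> a" using j1 fa by auto
  then have ja': "a \<le> j - 1" "j - 1 < j" using j1 by auto
  have "\<not> (a \<le> j - 1 \<and> f (j - 1) \<le> 0)" unfolding j_def
    by (rule not_less_Least) (use ja' in \<open>simp add: j_def\<close>)
  then have "f (j-1) \<ge> 1" using ja' by auto
  moreover have sj: "Suc (j-1) = j" using ja j1 by auto
  moreover have "f (Suc (j-1)) \<ge> f (j-1) - 1" by (rule st) (use ja' jb in auto)
  ultimately have "f j = 0" using j1 by auto
  moreover have "j \<noteq> b" using \<open>f j = 0\<close> fb by auto
  ultimately have "a < j" "j < b" "f j = 0" using j1 ja jb by auto
  then show ?thesis by blast
qed

definition kk :: "int list \<Rightarrow> nat" where
  "kk p = (LEAST j. 0 < j \<and> sum_list (take j p) = 0)"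

lemma kprops:
  assumes "(p,\<sigma>) \<in> wl_motzkin_first 1 n"
  shows "2 \<le> kk p" "kk p \<le> n - 2" "sum_list (take (kk p) p) = 0"
    "\<And>j. 1 \<le> j \<Longrightarrow> j < kk p \<Longrightarrow> sum_list (take j p) \<ge> 1" "p!(kk p - 1) = -1"
proof -
  from assms have W: "length p = n - 1" "set p \<subseteq> {-1,0,1}" "length \<sigma> = n" "distinct \<sigma>"
    "set \<sigma> = {1..n}" "cstr p \<sigma>" "motzkin n p" "p!0 = 1"
    by (auto simp: wl_motzkin_first_def wlm_iff)
  have n2: "n \<ge> 2" using motzkin_n[OF W(7)] .
  define S where "S j = sum_list (take j p)" for j
  have S1: "S 1 = 1" using W(1,8) n2 by (cases p) (auto simp: S_def)
  have Sn: "S (n-1) = -1" using W(7) by (simp add: motzkin_def S_def)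
  have Snn: "\<And>j. j \<in> {1..n-2} \<Longrightarrow> S j \<ge> 0" using W(7) by (simp add: motzkin_def S_def)
  have pi: "\<And>i. i < n - 1 \<Longrightarrow> p!i \<ge> -1"
  proof -
    fix i assume "i < n - 1"
    then have "p!i \<in> set p" using W(1) by simp
    then show "p!i \<ge> -1" using W(2) by auto
  qed
  have st: "\<And>i. i < n - 1 \<Longrightarrow> S (Suc i) = S i + p!i" using W(1) by (simp add: S_def ps_step)
  have "\<exists>j. 1 < j \<and> j < n - 1 \<and> S j = 0"
    by (rule ivt) (use st pi S1 Sn n2 in \<open>auto simp: S1\<close>)
  then obtain j where j: "1 < j" "j < n - 1" "S j = 0" by blast
  have k1: "0 < kk p \<and> S (kk p) = 0" unfolding kk_def S_def
    by (rule LeastI[of _ j]) (use j in \<open>simp add: S_def\<close>)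
  have kj: "kk p \<le> j" unfolding kk_def by (rule Least_le) (use j in \<open>simp add: S_def\<close>)
  have kne1: "kk p \<noteq> 1" using k1 S1 by auto
  show "2 \<le> kk p" using k1 kne1 by auto
  show "kk p \<le> n - 2" using kj j by auto
  show "sum_list (take (kk p) p) = 0" using k1 by (simp add: S_def)
  have lt: "\<And>j. 1 \<le> j \<Longrightarrow> j < kk p \<Longrightarrow> S j \<ge> 1"
  proof -
    fix i assume i: "1 \<le> i" "i < kk p"
    have "\<not> (0 < i \<and> sum_list (take i p) = 0)" unfolding kk_def
      by (rule not_less_Least) (use i in \<open>simp add: kk_def\<close>)
    then have "S i \<noteq> 0" using i by (simp add: S_def)
    moreover have "S i \<ge> 0" using Snn i kj j by auto
    ultimately show "S i \<ge> 1" by simp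
  qed
  then show "\<And>j. 1 \<le> j \<Longrightarrow> j < kk p \<Longrightarrow> sum_list (take j p) \<ge> 1" by (simp add: S_def)
  have "S (kk p - 1) \<ge> 1" by (rule lt) (use k1 kne1 in auto)
  moreover have "S (Suc (kk p - 1)) = S (kk p - 1) + p!(kk p - 1)" using st kj j by simp
  moreover have "Suc (kk p - 1) = kk p" using k1 by simp
  moreover have "p!(kk p - 1) \<ge> -1" using pi kj j by simp
  ultimately show "p!(kk p - 1) = -1" using k1 by simp
qed



lemma sum_neg: "sum_list (map uminus xs) = - sum_list (xs::int list)"
  by (induction xs) auto

lemma sum_split: "sum_list (xs::int list) = sum_list (take m xs) + sum_list (drop m xs)"
  by (metis append_take_drop_id sum_list_append)

lemma sum_rev_take: "j \<le> length xs \<Longrightarrow>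
  sum_list (take j (map uminus (rev xs))) = sum_list (take (length xs - j) xs) - sum_list (xs::int list)"
proof -
  assume j: "j \<le> length xs"
  have "take j (map uminus (rev xs)) = map uminus (rev (drop (length xs - j) xs))"
    by (simp add: take_map take_rev)
  then have "sum_list (take j (map uminus (rev xs))) = - sum_list (drop (length xs - j) xs)"
    by (simp add: sum_neg sum_list_rev)
  then show ?thesis using sum_split[of xs "length xs - j"] by simp
qed

lemma sum_take_add: "sum_list (take (k+j) p) = sum_list (take k p) + sum_list (take j (drop k (p::int list)))"
  by (simp add: take_add)

definition fl :: "nat set \<times> (int list \<times> nat list) \<Rightarrow> nat" where
  "fl = (\<lambda>(I,(q,\<tau>)). ur I (\<tau>!0))"

lemma ur_std0: "distinct L \<Longrightarrow> L \<noteq> [] \<Longrightarrow> ur (set L) (std L ! 0) = L!0"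
  using ur_std[of L] by (metis length_greater_0_conv nth_map std_def length_map)

lemma rr: "map uminus (rev (map uminus (rev xs))) = (xs::int list)"
  by (simp add: rev_map)

definition f2 :: "int list \<times> nat list \<Rightarrow> (nat set \<times> (int list \<times> nat list)) set" where
  "f2 = (\<lambda>(p,\<sigma>). {(set (take (kk p) \<sigma>), (map uminus (rev (take (kk p - 1) p)), std (rev (take (kk p) \<sigma>)))),
                   (set (drop (kk p) \<sigma>), (drop (kk p) p, std (drop (kk p) \<sigma>)))})"

lemma part2_fwd:
  assumes A: "(p,\<sigma>) \<in> wl_motzkin_first 1 n" and k: "k = kk p"
  shows "set (drop k \<sigma>) = {1..n} - set (take k \<sigma>)" "set (take k \<sigma>) \<subseteq> {1..n}"
    "card (set (take k \<sigma>)) = k" "card ({1..n} - set (take k \<sigma>)) = n - k"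
    "(map uminus (rev (take (k-1) p)), std (rev (take k \<sigma>))) \<in> wl_motzkin k"
    "(drop k p, std (drop k \<sigma>)) \<in> wl_motzkin (n-k)"
    "fl (set (take k \<sigma>), (map uminus (rev (take (k-1) p)), std (rev (take k \<sigma>)))) = \<sigma>!(k-1)"
    "fl (set (drop k \<sigma>), (drop k p, std (drop k \<sigma>))) = \<sigma>!k"
    "\<sigma>!(k-1) < \<sigma>!k"
    "p = take (k-1) p @ (-1) # drop k p"
proof -
  from A have W: "length p = n - 1" "set p \<subseteq> {-1,0,1}" "length \<sigma> = n" "distinct \<sigma>"
    "set \<sigma> = {1..n}" "cstr p \<sigma>" "motzkin n p" "p!0 = 1"
    by (auto simp: wl_motzkin_first_def wlm_iff)
  note K = kprops[OF A, folded k]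
  define S where "S j = sum_list (take j p)" for j
  have Snn: "\<And>j. j \<in> {1..n-2} \<Longrightarrow> S j \<ge> 0" using W(7) by (simp add: motzkin_def S_def)
  have Sn: "S (n-1) = -1" using W(7) by (simp add: motzkin_def S_def)
  have pd: "p = take (k-1) p @ p!(k-1) # drop k p"
    using id_take_nth_drop[of "k-1" p] K W(1) by simp
  then show pd': "p = take (k-1) p @ (-1) # drop k p" using K by simp
  have sd: "\<sigma> = take k \<sigma> @ \<sigma>!k # drop (Suc k) \<sigma>"
    using id_take_nth_drop[of k \<sigma>] K W(3) by simp
  have dk: "drop k \<sigma> = \<sigma>!k # drop (Suc k) \<sigma>" using K W(3) by (simp add: Cons_nth_drop_Suc)
  have lt: "length (take k \<sigma>) = Suc (length (take (k-1) p))" using K W(1,3) by simp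
  have C: "cstr (take (k-1) p) (take k \<sigma>) \<and> (p!(k-1) = -1 \<longrightarrow> last (take k \<sigma>) < \<sigma>!k) \<and>
    cstr (drop k p) (\<sigma>!k # drop (Suc k) \<sigma>)"
    using W(6) cstr_app[OF lt, of "p!(k-1)" "drop k p" "\<sigma>!k" "drop (Suc k) \<sigma>"] pd sd by auto
  have ne: "take k \<sigma> \<noteq> []" using K W(3) by auto
  have "last (take k \<sigma>) = take k \<sigma> ! (length (take k \<sigma>) - 1)" by (rule last_conv_nth[OF ne])
  then have lst: "last (take k \<sigma>) = \<sigma>!(k-1)" using K W(3) by simp
  show lt2: "\<sigma>!(k-1) < \<sigma>!k" using C K lst by simp
  have dt: "distinct (take k \<sigma>)" "distinct (drop k \<sigma>)" using W(4) by auto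
  have disj: "set (take k \<sigma>) \<inter> set (drop k \<sigma>) = {}" using W(4)
    by (metis append_take_drop_id distinct_append)
  have un: "set (take k \<sigma>) \<union> set (drop k \<sigma>) = {1..n}" using W(5)
    by (metis append_take_drop_id set_append)
  show "set (drop k \<sigma>) = {1..n} - set (take k \<sigma>)" using disj un by blast
  show "set (take k \<sigma>) \<subseteq> {1..n}" using un by blast
  show ck: "card (set (take k \<sigma>)) = k" using distinct_card[OF dt(1)] K W(3) by simp
  have "card (set (drop k \<sigma>)) = n - k" using distinct_card[OF dt(2)] W(3) by simp
  have "set (take k \<sigma>) \<subseteq> {1..n}" using un by blast
  then show "card ({1..n} - set (take k \<sigma>)) = n - k" using ck by (simp add: card_Diff_subset)
  define q1 where "q1 = map uminus (rev (take (k-1) p))"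
  define r where "r = rev (take k \<sigma>)"
  have dr: "distinct r" using dt by (simp add: r_def)
  have lr: "length r = k" using K W(3) by (simp add: r_def)
  have cq1: "cstr q1 r" unfolding q1_def r_def
    by (rule cstr_rev) (use lt C in auto)
  have sq1: "set q1 \<subseteq> {-1,0,1}" unfolding q1_def using W(2) set_take_subset[of "k-1" p] by auto
  have lq1: "length q1 = k - 1" using K W(1) by (simp add: q1_def)
  have Sk1: "S (k-1) = 1"
  proof -
    obtain k' where k': "k = Suc k'" using K by (cases k) auto
    have "S (Suc k') = S k' + p!k'" using K W(1) k' by (simp add: S_def ps_step)
    then show ?thesis using K k' by (simp add: S_def)
  qed
  have ltk: "length (take (k-1) p) = k-1" using K W(1) by simp
  have mq1: "motzkin k q1" unfolding motzkin_def
  proof (intro conjI ballI)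
    fix j assume j: "j \<in> {1..k-2}"
    have jle: "j \<le> length (take (k-1) p)" using j ltk by auto
    have "sum_list (take j q1) = sum_list (take (k-1-j) (take (k-1) p)) - sum_list (take (k-1) p)"
      unfolding q1_def using sum_rev_take[OF jle] ltk by simp
    then have "sum_list (take j q1) = S (k - 1 - j) - S (k-1)" by (simp add: S_def)
    moreover have "S (k - 1 - j) \<ge> 1" using K(4)[of "k-1-j", folded S_def] j by auto
    ultimately show "sum_list (take j q1) \<ge> 0" using Sk1 by simp
  next
    have "sum_list (take (k-1) q1) = sum_list (take 0 (take (k-1) p)) - sum_list (take (k-1) p)"
      unfolding q1_def using sum_rev_take[of "k-1" "take (k-1) p"] ltk by simp
    then have "sum_list (take (k-1) q1) = S 0 - S (k-1)" by (simp add: S_def)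
    then show "sum_list (take (k-1) q1) = -1" using Sk1 by (simp add: S_def)
  qed
  have "set r = set (take k \<sigma>)" by (simp add: r_def)
  then show "(map uminus (rev (take (k-1) p)), std (rev (take k \<sigma>))) \<in> wl_motzkin k"
    using std_props[OF dr] cq1 sq1 lq1 mq1 lr by (simp add: wlm_iff q1_def r_def[symmetric])
  show "fl (set (take k \<sigma>), (map uminus (rev (take (k-1) p)), std (rev (take k \<sigma>)))) = \<sigma>!(k-1)"
  proof -
    have "r \<noteq> []" using lr K by auto
    then have "ur (set r) (std r ! 0) = r!0" using ur_std0[OF dr] by simp
    moreover have "r!0 = \<sigma>!(k-1)" using K W(3) by (simp add: r_def rev_nth)
    ultimately show ?thesis by (simp add: fl_def r_def)
  qed
  define q2 where "q2 = drop k p"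
  have mq2: "motzkin (n-k) q2" unfolding motzkin_def
  proof (intro conjI ballI)
    fix j assume j: "j \<in> {1..n-k-2}"
    have "sum_list (take j q2) = S (k + j) - S k" unfolding q2_def S_def using sum_take_add[of k j p] by simp
    moreover have "S (k+j) \<ge> 0" using Snn j by auto
    ultimately show "sum_list (take j q2) \<ge> 0" using K(3) by (simp add: S_def)
  next
    have "sum_list (take (n-k-1) q2) = S (k + (n-k-1)) - S k"
      unfolding q2_def S_def using sum_take_add[of k "n-k-1" p] by simp
    moreover have "k + (n-k-1) = n - 1" using K by simp
    ultimately show "sum_list (take (n-k-1) q2) = -1" using K(3) Sn by (simp add: S_def)
  qed
  have cq2: "cstr q2 (drop k \<sigma>)" using C dk by (simp add: q2_def)
  have "set q2 \<subseteq> {-1,0,1}" unfolding q2_def using W(2) set_drop_subset[of k p] by auto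
  then show "(drop k p, std (drop k \<sigma>)) \<in> wl_motzkin (n-k)"
    using std_props[OF dt(2)] cq2 mq2 W(1,3) by (simp add: wlm_iff q2_def)
  show "fl (set (drop k \<sigma>), (drop k p, std (drop k \<sigma>))) = \<sigma>!k"
    using ur_std0[OF dt(2)] dk by (simp add: fl_def)
qed

lemma part2_img: "(p,\<sigma>) \<in> wl_motzkin_first 1 n \<Longrightarrow> f2 (p,\<sigma>) \<in> pair_set n"
proof -
  assume A: "(p,\<sigma>) \<in> wl_motzkin_first 1 n"
  define k where "k = kk p"
  note F = part2_fwd[OF A k_def]
  define I where "I = set (take k \<sigma>)"
  define P1 where "P1 = (map uminus (rev (take (k-1) p)), std (rev (take k \<sigma>)))"
  define P2 where "P2 = (drop k p, std (drop k \<sigma>))"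
  have eq: "f2 (p,\<sigma>) = {(I, P1), ({1..n} - I, P2)}"
    using F(1) by (simp add: f2_def k_def[symmetric] I_def P1_def P2_def)
  have "I \<subseteq> {1..n} \<and> P1 \<in> wl_motzkin (card I) \<and> P2 \<in> wl_motzkin (card ({1..n} - I))"
    using F(2-6) by (simp add: I_def P1_def P2_def)
  then show ?thesis unfolding eq pair_set_def by blast
qed



lemma part2_inj: "inj_on f2 (wl_motzkin_first 1 n)"
proof (rule inj_onI)
  fix x y assume xA: "x \<in> wl_motzkin_first 1 n" and yA: "y \<in> wl_motzkin_first 1 n" and eq: "f2 x = f2 y"
  obtain p \<sigma> where x: "x = (p,\<sigma>)" by (cases x)
  obtain p' \<sigma>' where y: "y = (p',\<sigma>')" by (cases y)
  define k where "k = kk p"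
  define k' where "k' = kk p'"
  note F = part2_fwd[OF xA[unfolded x] k_def]
  note G = part2_fwd[OF yA[unfolded y] k'_def]
  from xA have Wx: "length \<sigma> = n" "distinct \<sigma>" "p!0 = 1" "length p = n - 1"
    by (auto simp: x wl_motzkin_first_def wlm_iff)
  from yA have Wy: "length \<sigma>' = n" "distinct \<sigma>'" "length p' = n - 1"
    by (auto simp: y wl_motzkin_first_def wlm_iff)
  define e1 where "e1 = (set (take k \<sigma>), (map uminus (rev (take (k-1) p)), std (rev (take k \<sigma>))))"
  define e2 where "e2 = (set (drop k \<sigma>), (drop k p, std (drop k \<sigma>)))"
  define e1' where "e1' = (set (take k' \<sigma>'), (map uminus (rev (take (k'-1) p')), std (rev (take k' \<sigma>'))))"
  define e2' where "e2' = (set (drop k' \<sigma>'), (drop k' p', std (drop k' \<sigma>')))"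
  have "{e1,e2} = {e1',e2'}" using eq
    by (simp add: x y f2_def e1_def e2_def e1'_def e2'_def k_def k'_def)
  then have "(e1 = e1' \<and> e2 = e2') \<or> (e1 = e2' \<and> e2 = e1')" by (simp add: doubleton_eq_iff)
  then show "x = y"
  proof
    assume c: "e1 = e2' \<and> e2 = e1'"
    then have "fl e1 = fl e2'" "fl e2 = fl e1'" by auto
    then have "\<sigma>!(k-1) = \<sigma>'!k'" "\<sigma>!k = \<sigma>'!(k'-1)"
      using F(7,8) G(7,8) by (simp_all add: e1_def e2_def e1'_def e2'_def)
    then show "x = y" using F(9) G(9) by simp
  next
    assume c: "e1 = e1' \<and> e2 = e2'"
    then have s1: "set (take k \<sigma>) = set (take k' \<sigma>')" by (simp add: e1_def e1'_def)
    then have kk: "k' = k" using F(3) G(3) by simp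
    have q: "map uminus (rev (take (k-1) p)) = map uminus (rev (take (k-1) p'))"
      and t1: "std (rev (take k \<sigma>)) = std (rev (take k \<sigma>'))"
      and s2: "set (drop k \<sigma>) = set (drop k \<sigma>')"
      and d: "drop k p = drop k p'"
      and t2: "std (drop k \<sigma>) = std (drop k \<sigma>')"
      using c kk by (simp_all add: e1_def e2_def e1'_def e2'_def)
    have "take (k-1) p = take (k-1) p'" using arg_cong[OF q, of "\<lambda>z. map uminus (rev z)"] by (simp add: rr)
    then have pp: "p = p'" using F(10) G(10) d kk by metis
    have "map (ur (set (rev (take k \<sigma>)))) (std (rev (take k \<sigma>))) =
          map (ur (set (rev (take k \<sigma>')))) (std (rev (take k \<sigma>')))" using t1 s1 kk by simp
    then have "rev (take k \<sigma>) = rev (take k \<sigma>')" using Wx(2) Wy(2)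
      by (simp add: ur_std del: set_rev)
    then have tt: "take k \<sigma> = take k \<sigma>'" by simp
    have "map (ur (set (drop k \<sigma>))) (std (drop k \<sigma>)) =
          map (ur (set (drop k \<sigma>'))) (std (drop k \<sigma>'))" using t2 s2 by simp
    then have "drop k \<sigma> = drop k \<sigma>'" using Wx(2) Wy(2) by (simp add: ur_std)
    then have "\<sigma> = \<sigma>'" using tt by (metis append_take_drop_id)
    then show "x = y" using pp x y by simp
  qed
qed



lemma part2_constr:
  assumes I: "I \<subseteq> {1..n}" and J: "J = {1..n} - I"
    and P1: "(q1,\<tau>1) \<in> wl_motzkin (card I)" and P2: "(q2,\<tau>2) \<in> wl_motzkin (card J)"
    and lt: "ur I (\<tau>1!0) < ur J (\<tau>2!0)"
  shows "{(I,(q1,\<tau>1)),(J,(q2,\<tau>2))} \<in> f2 ` wl_motzkin_first 1 n"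
proof -
  define k where "k = card I"
  define m where "m = card J"
  from P1 have W1: "length q1 = k - 1" "set q1 \<subseteq> {-1,0,1}" "length \<tau>1 = k" "distinct \<tau>1"
    "set \<tau>1 = {1..k}" "cstr q1 \<tau>1" "motzkin k q1"
    by (auto simp: wlm_iff k_def)
  from P2 have W2: "length q2 = m - 1" "set q2 \<subseteq> {-1,0,1}" "length \<tau>2 = m" "distinct \<tau>2"
    "set \<tau>2 = {1..m}" "cstr q2 \<tau>2" "motzkin m q2"
    by (auto simp: wlm_iff m_def)
  have k2: "k \<ge> 2" using motzkin_n[OF W1(7)] .
  have m2: "m \<ge> 2" using motzkin_n[OF W2(7)] .
  have fI: "finite I" using I finite_subset by blast
  have fJ: "finite J" using J by simp
  have kn: "k \<le> n" using card_mono[OF _ I] by (simp add: k_def)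
  have mk: "m = n - k" using card_Diff_subset[OF fI I] by (simp add: m_def k_def J)
  have nkm: "n = k + m" using kn mk by simp
  note U1 = unstd_props[OF fI W1(4), folded k_def, OF W1(5)]
  note U2 = unstd_props[OF fJ W2(4), folded m_def, OF W2(5)]
  define r1 where "r1 = map uminus (rev q1)"
  define p where "p = r1 @ (-1) # q2"
  define s1 where "s1 = rev (map (ur I) \<tau>1)"
  define s2 where "s2 = map (ur J) \<tau>2"
  define \<sigma> where "\<sigma> = s1 @ s2"
  obtain t ts where tt: "\<tau>2 = t # ts" using W2(3) m2 by (cases \<tau>2) auto
  obtain k' where k': "k = Suc k'" using k2 by (cases k) auto
  have lr1: "length r1 = k'" using W1(1) k' by (simp add: r1_def)
  have ls1: "length s1 = k" using W1(3) by (simp add: s1_def)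
  have ls1': "length s1 = Suc (length r1)" using ls1 lr1 k' by simp
  have cr1: "cstr r1 s1" unfolding r1_def s1_def
    by (rule cstr_rev) (use W1 U1 k' in auto)
  have last1: "last s1 = ur I (\<tau>1!0)" unfolding s1_def using W1(3) k2
    by (cases \<tau>1) (auto simp: last_rev)
  have cp: "cstr p \<sigma>" unfolding p_def \<sigma>_def s2_def tt
    using cstr_app[OF ls1', of "-1" q2 "ur J t" "map (ur J) ts"] cr1 last1 lt U2(4)[OF W2(6)] tt
    by simp
  have ds: "distinct \<sigma>" unfolding \<sigma>_def s1_def s2_def using U1(2) U2(2) U1(3) U2(3) J by auto
  have ss: "set \<sigma> = {1..n}" unfolding \<sigma>_def s1_def s2_def using U1(3) U2(3) J I by auto
  have lp: "length p = n - 1" unfolding p_def using lr1 W2(1) nkm k' m2 by simp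
  have ls: "length \<sigma> = n" unfolding \<sigma>_def using ls1 W2(3) nkm by (simp add: s2_def)
  have sp: "set p \<subseteq> {-1,0,1}" unfolding p_def r1_def using W1(2) W2(2) by auto
  define R where "R j = sum_list (take j q1)" for j
  define Q where "Q j = sum_list (take j q2)" for j
  define T where "T j = sum_list (take j p)" for j
  have R1: "R k' = -1" using W1(7) k' by (simp add: motzkin_def R_def)
  have Rnn: "\<And>j. j \<le> k' - 1 \<Longrightarrow> R j \<ge> 0"
  proof -
    fix j assume j: "j \<le> k' - 1"
    show "R j \<ge> 0"
    proof (cases "j = 0")
      case True then show ?thesis by (simp add: R_def)
    next
      case False
      then have "j \<in> {1..k-2}" using j k' by auto
      then show ?thesis using W1(7) by (simp add: motzkin_def R_def)
    qed
  qed
  have Tlow: "\<And>j. 1 \<le> j \<Longrightarrow> j \<le> k' \<Longrightarrow> T j \<ge> 1"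
  proof -
    fix j assume j: "1 \<le> j" "j \<le> k'"
    have "take j p = take j r1" unfolding p_def using j lr1 by simp
    moreover have jl: "j \<le> length q1" using j W1(1) k' by simp
    ultimately have "T j = R (length q1 - j) - sum_list q1" unfolding T_def R_def r1_def
      using sum_rev_take[OF jl] by simp
    moreover have "sum_list q1 = R k'" using W1(1) k' by (simp add: R_def)
    moreover have "R (length q1 - j) \<ge> 0" using Rnn[of "length q1 - j"] W1(1) k' j by simp
    ultimately show "T j \<ge> 1" using R1 by simp
  qed
  have sr1: "sum_list r1 = 1" unfolding r1_def using R1 W1(1) k'
    by (simp add: sum_neg sum_list_rev R_def)
  have Thigh: "\<And>j. k \<le> j \<Longrightarrow> T j = Q (j - k)"
  proof -
    fix j assume j: "k \<le> j"
    have "j - length r1 = Suc (j - k)" using j lr1 k' by simp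
    then have "take j p = r1 @ (-1) # take (j-k) q2" unfolding p_def using j lr1 k' by simp
    then show "T j = Q (j - k)" unfolding T_def Q_def using sr1 by simp
  qed
  have Q1: "Q (m-1) = -1" using W2(7) by (simp add: motzkin_def Q_def)
  have mp: "motzkin n p" unfolding motzkin_def
  proof (intro conjI ballI)
    fix j assume j: "j \<in> {1..n-2}"
    show "sum_list (take j p) \<ge> 0"
    proof (cases "j \<le> k'")
      case True then show ?thesis using Tlow[of j] j by (simp add: T_def)
    next
      case False
      then have "k \<le> j" using k' by simp
      then have "sum_list (take j p) = Q (j-k)" using Thigh by (simp add: T_def)
      moreover have "Q (j-k) \<ge> 0"
      proof (cases "j - k = 0")
        case True then show ?thesis by (simp add: Q_def)
      next
        case False
        then have "j - k \<in> {1..m-2}" using j nkm by auto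
        then show ?thesis using W2(7) by (simp add: motzkin_def Q_def)
      qed
      ultimately show ?thesis by simp
    qed
  next
    have "n - 1 - k = m - 1" using nkm by simp
    then show "sum_list (take (n-1) p) = -1" using Thigh[of "n-1"] Q1 nkm m2 by (simp add: T_def)
  qed
  have p0: "p!0 = 1"
  proof -
    have "T 1 \<ge> 1" using Tlow[of 1] k' k2 by simp
    moreover have "T 1 = p!0" unfolding T_def using lp nkm k2 m2
      by (cases p) auto
    moreover have "p!0 \<in> set p" using lp nkm k2 m2 by (intro nth_mem) simp
    then have "p!0 \<in> {-1,0,1}" using sp by blast
    ultimately show ?thesis by auto
  qed
  have inA: "(p,\<sigma>) \<in> wl_motzkin_first 1 n"
    unfolding wl_motzkin_first_def using lp sp ls ds ss cp mp p0 by (simp add: wlm_iff)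
  have kp: "kk p = k" unfolding kk_def
  proof (rule Least_equality)
    show "0 < k \<and> sum_list (take k p) = 0" using Thigh[of k] k2 by (simp add: T_def Q_def)
  next
    fix y assume y: "0 < y \<and> sum_list (take y p) = 0"
    show "k \<le> y"
    proof (rule ccontr)
      assume "\<not> k \<le> y"
      then have "T y \<ge> 1" using Tlow[of y] y k' by simp
      then show False using y by (simp add: T_def)
    qed
  qed
  have tk: "take k \<sigma> = s1" "drop k \<sigma> = s2" using ls1 by (simp_all add: \<sigma>_def)
  have tp: "take (k-1) p = r1" "drop k p = q2" using lr1 k' by (simp_all add: p_def)
  have "f2 (p,\<sigma>) = {(I,(q1,\<tau>1)),(J,(q2,\<tau>2))}"
    unfolding f2_def using kp tk tp U1(3,5) U2(3,5)
    by (simp add: s1_def s2_def r1_def rr)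
  then show ?thesis using inA by (metis image_eqI)
qed



lemma fl_in: "(q,\<tau>) \<in> wl_motzkin (card I) \<Longrightarrow> finite I \<Longrightarrow> ur I (\<tau>!0) \<in> I"
proof -
  assume P: "(q,\<tau>) \<in> wl_motzkin (card I)" and f: "finite I"
  then have W: "length \<tau> = card I" "set \<tau> = {1..card I}" "motzkin (card I) q" by (auto simp: wlm_iff)
  have "card I \<ge> 2" using motzkin_n[OF W(3)] .
  then have "\<tau>!0 \<in> set \<tau>" using W(1) by (intro nth_mem) simp
  then show ?thesis using ur_in[OF f] W(2) by simp
qed

lemma part2: "bij_betw f2 (wl_motzkin_first 1 n) (pair_set n)"
  unfolding bij_betw_def
proof (intro conjI part2_inj equalityI)
  show "f2 ` wl_motzkin_first 1 n \<subseteq> pair_set n"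
  proof (rule image_subsetI)
    fix x assume "x \<in> wl_motzkin_first 1 n"
    then show "f2 x \<in> pair_set n" using part2_img by (cases x) blast
  qed
  show "pair_set n \<subseteq> f2 ` wl_motzkin_first 1 n"
  proof
    fix X assume "X \<in> pair_set n"
    then obtain I P1 P2 where X: "X = {(I, P1), ({1..n} - I, P2)}" and I: "I \<subseteq> {1..n}"
      and P1: "P1 \<in> wl_motzkin (card I)" and P2: "P2 \<in> wl_motzkin (card ({1..n} - I))"
      unfolding pair_set_def by blast
    obtain q1 \<tau>1 where p1: "P1 = (q1,\<tau>1)" by (cases P1)
    obtain q2 \<tau>2 where p2: "P2 = (q2,\<tau>2)" by (cases P2)
    define J where "J = {1..n} - I"
    have fI: "finite I" using I finite_subset by blast
    have fJ: "finite J" by (simp add: J_def)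
    have a: "ur I (\<tau>1!0) \<in> I" using fl_in[OF P1[unfolded p1] fI] .
    have b: "ur J (\<tau>2!0) \<in> J" using fl_in[OF P2[unfolded p2 J_def[symmetric]] fJ] .
    have ne: "ur I (\<tau>1!0) \<noteq> ur J (\<tau>2!0)" using a b by (auto simp: J_def)
    show "X \<in> f2 ` wl_motzkin_first 1 n"
    proof (cases "ur I (\<tau>1!0) < ur J (\<tau>2!0)")
      case True
      show ?thesis unfolding X p1 p2 J_def[symmetric]
        by (rule part2_constr[OF I J_def P1[unfolded p1] P2[unfolded p2 J_def[symmetric]] True])
    next
      case False
      then have lt: "ur J (\<tau>2!0) < ur I (\<tau>1!0)" using ne by simp
      have J': "J \<subseteq> {1..n}" and I': "I = {1..n} - J" using I by (auto simp: J_def)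
      have "{(J,(q2,\<tau>2)),(I,(q1,\<tau>1))} \<in> f2 ` wl_motzkin_first 1 n"
        by (rule part2_constr[OF J' I' P2[unfolded p2 J_def[symmetric]] P1[unfolded p1] lt])
      then show ?thesis unfolding X p1 p2 J_def[symmetric] by (simp add: insert_commute)
    qed
  qed
qed

theorem proposition1:
  fixes n :: nat
  assumes "n \<ge> 1"
  shows "(\<exists>f. bij_betw f (wl_motzkin_first 0 n) ({1..n} \<times> wl_motzkin (n - 1)))
       \<and> (\<exists>g. bij_betw g (wl_motzkin_first 1 n) (pair_set n))"
  using part1 part2 by blast

end
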